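(* For every projection algebra $P$, every DRC-semigroup $S$, and every projection algebra morphism $\phi:P\to\mathbf P(S)$, there exists a unique DRC-morphism $\Phi:\mathbb F(P)\to S$ whose restriction to $P$ (identified with $\mathbf P(\mathbb F(P))$ via $p\leftrightarrow\overline{x_p}$) is $\phi$, i.e.\ $\overline{x_p}\,\Phi=p\phi$ for all $p\in P$.
   Context: Maps are written on the right and composed left to right. A projection algebra is a set $P$ with maps $\theta_p,\delta_p:P\to P$ ($p\in P$) such that for all $p,q$: $p\theta_p=p$, $p\delta_p=p$; $p\theta_{q\theta_p}=q\theta_p$, $p\delta_{q\delta_p}=q\delta_p$; $\theta_q\theta_{q\theta_p}=\theta_q\theta_p$, $\delta_q\delta_{q\delta_p}=\delta_q\delta_p$; $\theta_p\delta_p=\theta_p$, $\delta_p\theta_p=\delta_p$; $\theta_{p\delta_q}\theta_p=\theta_q\theta_p$, $\delta_{p\theta_q}\delta_p=\delta_q\delta_p$. A projection algebra morphism $\phi:P\to P'$ satisfies $(q\theta_p)\phi=(q\phi)\theta'_{p\phi}$, $(q\delta_p)\phi=(q\phi)\delta'_{p\phi}$. Write $p\,\mathscr F\,q$ iff $p=q\delta_p$ and $q=p\theta_q$. A DRC-semigroup is $(S,\cdot,D,R)$, $(S,\cdot)$ a semigroup, $D,R:S\to S$ with, for all $a,b$: $D(a)a=a$, $aR(a)=a$; $D(ab)=D(aD(b))$, $R(ab)=R(R(a)b)$; $D(ab)=D(a)D(ab)D(a)$, $R(ab)=R(b)R(ab)R(b)$; $R(D(a))=D(a)$, $D(R(a))=R(a)$.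 A DRC-morphism preserves $\cdot,D,R$. $\mathbf P(S)=\{D(a):a\in S\}$ is a projection algebra under $q\theta_p=R(qp)$, $q\delta_p=D(pq)$. $\mathbb F(P)$ is the semigroup presented by generators $x_p$ ($p\in P$) and relations $x_p^2=x_p$, $x_px_q=x_px_{p\theta_q}$, $x_px_q=x_{q\delta_p}x_q$; every element equals $\overline{x_{p_1}\cdots x_{p_k}}$ for some $p_1\mathscr F\cdots\mathscr F p_k$ with $p_1,p_k$ determined, and it is a DRC-semigroup with $D(\overline{x_{p_1}\cdots x_{p_k}})=\overline{x_{p_1}}$, $R(\overline{x_{p_1}\cdots x_{p_k}})=\overline{x_{p_k}}$, whose projections are exactly the $\overline{x_p}$, $p\in P$. *)

theory Defs
  imports Main
begin

text \<open>Conventions. Maps are written on the right. For a projection algebra with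
carrier P we write th x p for x theta_p and dl x p for x delta_p.\<close>

definition proj_alg :: "'p set \<Rightarrow> ('p \<Rightarrow> 'p \<Rightarrow> 'p) \<Rightarrow> ('p \<Rightarrow> 'p \<Rightarrow> 'p) \<Rightarrow> bool" where
  "proj_alg P th dl \<longleftrightarrow>
     (\<forall>x\<in>P. \<forall>p\<in>P. th x p \<in> P \<and> dl x p \<in> P) \<and>
     (\<forall>p\<in>P. th p p = p \<and> dl p p = p) \<and>
     (\<forall>p\<in>P. \<forall>q\<in>P. th p (th q p) = th q p \<and> dl p (dl q p) = dl q p) \<and>
     (\<forall>p\<in>P. \<forall>q\<in>P. \<forall>x\<in>P. th (th x q) (th q p) = th (th x q) p
                          \<and> dl (dl x q) (dl q p) = dl (dl x q) p) \<and>
     (\<forall>p\<in>P. \<forall>x\<in>P. dl (th x p) p = th x p \<and> th (dl x p) p = dl x p) \<and>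
     (\<forall>p\<in>P. \<forall>q\<in>P. \<forall>x\<in>P. th (th x (dl p q)) p = th (th x q) p
                          \<and> dl (dl x (th p q)) p = dl (dl x q) p)"

definition proj_alg_morph ::
  "'p set \<Rightarrow> ('p \<Rightarrow> 'p \<Rightarrow> 'p) \<Rightarrow> ('p \<Rightarrow> 'p \<Rightarrow> 'p) \<Rightarrow>
   'q set \<Rightarrow> ('q \<Rightarrow> 'q \<Rightarrow> 'q) \<Rightarrow> ('q \<Rightarrow> 'q \<Rightarrow> 'q) \<Rightarrow> ('p \<Rightarrow> 'q) \<Rightarrow> bool" where
  "proj_alg_morph P th dl P' th' dl' \<phi> \<longleftrightarrow>
     (\<forall>p\<in>P. \<phi> p \<in> P') \<and>
     (\<forall>p\<in>P. \<forall>q\<in>P. \<phi> (th q p) = th' (\<phi> q) (\<phi> p) \<and> \<phi> (dl q p) = dl' (\<phi> q) (\<phi> p))"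

definition drc_semigroup :: "'s set \<Rightarrow> ('s \<Rightarrow> 's \<Rightarrow> 's) \<Rightarrow> ('s \<Rightarrow> 's) \<Rightarrow> ('s \<Rightarrow> 's) \<Rightarrow> bool" where
  "drc_semigroup S m D R \<longleftrightarrow>
     (\<forall>a\<in>S. \<forall>b\<in>S. m a b \<in> S) \<and> (\<forall>a\<in>S. D a \<in> S \<and> R a \<in> S) \<and>
     (\<forall>a\<in>S. \<forall>b\<in>S. \<forall>c\<in>S. m (m a b) c = m a (m b c)) \<and>
     (\<forall>a\<in>S. m (D a) a = a \<and> m a (R a) = a) \<and>
     (\<forall>a\<in>S. \<forall>b\<in>S. D (m a b) = D (m a (D b)) \<and> R (m a b) = R (m (R a) b)) \<and>
     (\<forall>a\<in>S. \<forall>b\<in>S. D (m a b) = m (m (D a) (D (m a b))) (D a)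
                   \<and> R (m a b) = m (m (R b) (R (m a b))) (R b)) \<and>
     (\<forall>a\<in>S. R (D a) = D a \<and> D (R a) = R a)"

definition drc_morph ::
  "'s set \<Rightarrow> ('s \<Rightarrow> 's \<Rightarrow> 's) \<Rightarrow> ('s \<Rightarrow> 's) \<Rightarrow> ('s \<Rightarrow> 's) \<Rightarrow>
   't set \<Rightarrow> ('t \<Rightarrow> 't \<Rightarrow> 't) \<Rightarrow> ('t \<Rightarrow> 't) \<Rightarrow> ('t \<Rightarrow> 't) \<Rightarrow> ('s \<Rightarrow> 't) \<Rightarrow> bool" where
  "drc_morph S m D R T m' D' R' \<Phi> \<longleftrightarrow>
     (\<forall>a\<in>S. \<Phi> a \<in> T) \<and>
     (\<forall>a\<in>S. \<forall>b\<in>S. \<Phi> (m a b) = m' (\<Phi> a) (\<Phi> b)) \<and>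
     (\<forall>a\<in>S. \<Phi> (D a) = D' (\<Phi> a) \<and> \<Phi> (R a) = R' (\<Phi> a))"

definition projs :: "'s set \<Rightarrow> ('s \<Rightarrow> 's) \<Rightarrow> 's set" where
  "projs S D = D ` S"

definition projs_th :: "('s \<Rightarrow> 's \<Rightarrow> 's) \<Rightarrow> ('s \<Rightarrow> 's) \<Rightarrow> 's \<Rightarrow> 's \<Rightarrow> 's" where
  "projs_th m R q p = R (m q p)"

definition projs_dl :: "('s \<Rightarrow> 's \<Rightarrow> 's) \<Rightarrow> ('s \<Rightarrow> 's) \<Rightarrow> 's \<Rightarrow> 's \<Rightarrow> 's" where
  "projs_dl m D q p = D (m p q)"

text \<open>The semigroup F(P): nonempty words over P (word [p1,...,pk] stands for
  x_p1 ... x_pk) modulo the congruence generated by the defining relations.\<close>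

inductive feq :: "'p set \<Rightarrow> ('p \<Rightarrow> 'p \<Rightarrow> 'p) \<Rightarrow> ('p \<Rightarrow> 'p \<Rightarrow> 'p) \<Rightarrow> 'p list \<Rightarrow> 'p list \<Rightarrow> bool"
  for P th dl where
  idem: "p \<in> P \<Longrightarrow> feq P th dl [p, p] [p]"
| rth: "p \<in> P \<Longrightarrow> q \<in> P \<Longrightarrow> feq P th dl [p, q] [p, th p q]"
| rdl: "p \<in> P \<Longrightarrow> q \<in> P \<Longrightarrow> feq P th dl [p, q] [dl q p, q]"
| refl: "set w \<subseteq> P \<Longrightarrow> feq P th dl w w"
| sym: "feq P th dl u v \<Longrightarrow> feq P th dl v u"
| trans: "feq P th dl u v \<Longrightarrow> feq P th dl v w \<Longrightarrow> feq P th dl u w"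
| ctxt: "feq P th dl u v \<Longrightarrow> set x \<subseteq> P \<Longrightarrow> set y \<subseteq> P \<Longrightarrow> feq P th dl (x @ u @ y) (x @ v @ y)"

definition fclass :: "'p set \<Rightarrow> ('p \<Rightarrow> 'p \<Rightarrow> 'p) \<Rightarrow> ('p \<Rightarrow> 'p \<Rightarrow> 'p) \<Rightarrow> 'p list \<Rightarrow> 'p list set" where
  "fclass P th dl w = {v. feq P th dl w v}"

definition Fcar :: "'p set \<Rightarrow> ('p \<Rightarrow> 'p \<Rightarrow> 'p) \<Rightarrow> ('p \<Rightarrow> 'p \<Rightarrow> 'p) \<Rightarrow> 'p list set set" where
  "Fcar P th dl = {fclass P th dl w | w. w \<noteq> [] \<and> set w \<subseteq> P}"

definition Fmult :: "'p set \<Rightarrow> ('p \<Rightarrow> 'p \<Rightarrow> 'p) \<Rightarrow> ('p \<Rightarrow> 'p \<Rightarrow> 'p) \<Rightarrow>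
    'p list set \<Rightarrow> 'p list set \<Rightarrow> 'p list set" where
  "Fmult P th dl A B = fclass P th dl ((SOME u. u \<in> A) @ (SOME v. v \<in> B))"

definition Fgen :: "'p set \<Rightarrow> ('p \<Rightarrow> 'p \<Rightarrow> 'p) \<Rightarrow> ('p \<Rightarrow> 'p \<Rightarrow> 'p) \<Rightarrow> 'p \<Rightarrow> 'p list set" where
  "Fgen P th dl p = fclass P th dl [p]"

definition Frel :: "('p \<Rightarrow> 'p \<Rightarrow> 'p) \<Rightarrow> ('p \<Rightarrow> 'p \<Rightarrow> 'p) \<Rightarrow> 'p \<Rightarrow> 'p \<Rightarrow> bool" where
  "Frel th dl p q \<longleftrightarrow> p = dl q p \<and> q = th p q"

definition Fchain_rep :: "'p set \<Rightarrow> ('p \<Rightarrow> 'p \<Rightarrow> 'p) \<Rightarrow> ('p \<Rightarrow> 'p \<Rightarrow> 'p) \<Rightarrow> 'p list set \<Rightarrow> 'p list" where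
  "Fchain_rep P th dl A = (SOME ps. ps \<noteq> [] \<and> set ps \<subseteq> P \<and>
      successively (Frel th dl) ps \<and> fclass P th dl ps = A)"

definition FD :: "'p set \<Rightarrow> ('p \<Rightarrow> 'p \<Rightarrow> 'p) \<Rightarrow> ('p \<Rightarrow> 'p \<Rightarrow> 'p) \<Rightarrow> 'p list set \<Rightarrow> 'p list set" where
  "FD P th dl A = Fgen P th dl (hd (Fchain_rep P th dl A))"

definition FR :: "'p set \<Rightarrow> ('p \<Rightarrow> 'p \<Rightarrow> 'p) \<Rightarrow> ('p \<Rightarrow> 'p \<Rightarrow> 'p) \<Rightarrow> 'p list set \<Rightarrow> 'p list set" where
  "FR P th dl A = Fgen P th dl (last (Fchain_rep P th dl A))"

end

theory Submission imports Defs begin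

fun prodl :: "('s \<Rightarrow> 's \<Rightarrow> 's) \<Rightarrow> 's list \<Rightarrow> 's" where
  "prodl m [] = undefined"
| "prodl m [a] = a"
| "prodl m (a # b # w) = m a (prodl m (b # w))"

locale ctx =
  fixes P :: "'p set" and th dl :: "'p \<Rightarrow> 'p \<Rightarrow> 'p"
    and S :: "'s set" and m :: "'s \<Rightarrow> 's \<Rightarrow> 's" and D R :: "'s \<Rightarrow> 's"
    and \<phi> :: "'p \<Rightarrow> 's"
  assumes pa: "proj_alg P th dl"
    and drc: "drc_semigroup S m D R"
    and mor: "proj_alg_morph P th dl (projs S D) (projs_th m R) (projs_dl m D) \<phi>"
begin

lemma cl: "x\<in>P \<Longrightarrow> p\<in>P \<Longrightarrow> th x p \<in> P" "x\<in>P \<Longrightarrow> p\<in>P \<Longrightarrow> dl x p \<in> P"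
  using pa unfolding proj_alg_def by auto
lemma a1: "p\<in>P \<Longrightarrow> th p p = p" "p\<in>P \<Longrightarrow> dl p p = p"
  using pa unfolding proj_alg_def by auto
lemma a2: "p\<in>P \<Longrightarrow> q\<in>P \<Longrightarrow> th p (th q p) = th q p" "p\<in>P \<Longrightarrow> q\<in>P \<Longrightarrow> dl p (dl q p) = dl q p"
  using pa unfolding proj_alg_def by auto
lemma a3: "p\<in>P \<Longrightarrow> q\<in>P \<Longrightarrow> x\<in>P \<Longrightarrow> th (th x q) (th q p) = th (th x q) p"
   "p\<in>P \<Longrightarrow> q\<in>P \<Longrightarrow> x\<in>P \<Longrightarrow> dl (dl x q) (dl q p) = dl (dl x q) p"
  using pa unfolding proj_alg_def by auto
lemma a4: "p\<in>P \<Longrightarrow> x\<in>P \<Longrightarrow> dl (th x p) p = th x p" "p\<in>P \<Longrightarrow> x\<in>P \<Longrightarrow> th (dl x p) p = dl x p"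
  using pa unfolding proj_alg_def by auto
lemma a5: "p\<in>P \<Longrightarrow> q\<in>P \<Longrightarrow> x\<in>P \<Longrightarrow> th (th x (dl p q)) p = th (th x q) p"
   "p\<in>P \<Longrightarrow> q\<in>P \<Longrightarrow> x\<in>P \<Longrightarrow> dl (dl x (th p q)) p = dl (dl x q) p"
  using pa unfolding proj_alg_def by auto

lemma L1: "a\<in>P \<Longrightarrow> q\<in>P \<Longrightarrow> Frel th dl (dl (th a q) a) (th a q)"
  unfolding Frel_def by (smt (verit, best) a1(1) a2(2) a3(1) a4(1,2) a5(1,2) cl(1,2))
lemma L2: "s\<in>P \<Longrightarrow> r\<in>P \<Longrightarrow> t\<in>P \<Longrightarrow> Frel th dl s r \<Longrightarrow> Frel th dl (dl (dl t r) s) (dl t r)"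
  unfolding Frel_def by (smt (verit) a2(1) a3(2) a4(1,2) a5(1) cl(1,2))

lemma ax:
  "\<forall>a\<in>S. \<forall>b\<in>S. m a b \<in> S" "\<forall>a\<in>S. D a \<in> S \<and> R a \<in> S"
  "\<forall>a\<in>S. \<forall>b\<in>S. \<forall>c\<in>S. m (m a b) c = m a (m b c)"
  "\<forall>a\<in>S. m (D a) a = a \<and> m a (R a) = a"
  "\<forall>a\<in>S. \<forall>b\<in>S. D (m a b) = D (m a (D b)) \<and> R (m a b) = R (m (R a) b)"
  "\<forall>a\<in>S. \<forall>b\<in>S. D (m a b) = m (m (D a) (D (m a b))) (D a)
                   \<and> R (m a b) = m (m (R b) (R (m a b))) (R b)"
  "\<forall>a\<in>S. R (D a) = D a \<and> D (R a) = R a"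
  by (insert drc[unfolded drc_semigroup_def], elim conjE, assumption)+

lemma mS: "a\<in>S \<Longrightarrow> b\<in>S \<Longrightarrow> m a b \<in> S" using ax(1) by blast
lemma DS: "a\<in>S \<Longrightarrow> D a \<in> S" using ax(2) by blast
lemma RS: "a\<in>S \<Longrightarrow> R a \<in> S" using ax(2) by blast
lemma assoc: "a\<in>S \<Longrightarrow> b\<in>S \<Longrightarrow> c\<in>S \<Longrightarrow> m (m a b) c = m a (m b c)" using ax(3) by blast
lemma d1: "a\<in>S \<Longrightarrow> m (D a) a = a" using ax(4) by blast
lemma r1: "a\<in>S \<Longrightarrow> m a (R a) = a" using ax(4) by blast
lemma d2: "a\<in>S \<Longrightarrow> b\<in>S \<Longrightarrow> D (m a b) = D (m a (D b))" using ax(5) by blast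
lemma r2: "a\<in>S \<Longrightarrow> b\<in>S \<Longrightarrow> R (m a b) = R (m (R a) b)" using ax(5) by blast
lemma d3: "a\<in>S \<Longrightarrow> b\<in>S \<Longrightarrow> D (m a b) = m (m (D a) (D (m a b))) (D a)" using ax(6) by blast
lemma r3: "a\<in>S \<Longrightarrow> b\<in>S \<Longrightarrow> R (m a b) = m (m (R b) (R (m a b))) (R b)" using ax(6) by blast
lemma d4: "a\<in>S \<Longrightarrow> R (D a) = D a" using ax(7) by blast
lemma r4: "a\<in>S \<Longrightarrow> D (R a) = R a" using ax(7) by blast

lemma mor1: "\<forall>p\<in>P. \<phi> p \<in> D ` S"
  and mor2: "\<forall>p\<in>P. \<forall>q\<in>P. \<phi> (th q p) = R (m (\<phi> q) (\<phi> p)) \<and> \<phi> (dl q p) = D (m (\<phi> p) (\<phi> q))"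
  by (insert mor[unfolded proj_alg_morph_def projs_def projs_th_def projs_dl_def], elim conjE, assumption)+

lemma phi_obt: "p\<in>P \<Longrightarrow> \<exists>a. a \<in> S \<and> \<phi> p = D a"
proof -
  assume "p\<in>P"
  then have "\<phi> p \<in> D ` S" using mor1 by simp
  then show ?thesis by auto
qed

lemma phiS: "p\<in>P \<Longrightarrow> \<phi> p \<in> S"
  using phi_obt DS by metis
lemma phiproj: "p\<in>P \<Longrightarrow> D (\<phi> p) = \<phi> p \<and> R (\<phi> p) = \<phi> p"
proof -
  assume "p\<in>P"
  then obtain a where a: "a\<in>S" "\<phi> p = D a" using phi_obt by blast
  have "D (D a) = D a" using r4[OF DS[OF a(1)]] d4[OF a(1)] by simp
  then show ?thesis using a(2) d4[OF a(1)] by simp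
qed
lemma phiidem: "p\<in>P \<Longrightarrow> m (\<phi> p) (\<phi> p) = \<phi> p"
  using d1[OF phiS] phiproj by simp
lemma phith: "p\<in>P \<Longrightarrow> q\<in>P \<Longrightarrow> \<phi> (th p q) = R (m (\<phi> p) (\<phi> q))"
  using mor2 by simp
lemma phidl: "p\<in>P \<Longrightarrow> q\<in>P \<Longrightarrow> \<phi> (dl q p) = D (m (\<phi> p) (\<phi> q))"
  using mor2 by simp

lemma projD: "p\<in>P \<Longrightarrow> q\<in>P \<Longrightarrow> m (D (m (\<phi> p) (\<phi> q))) (\<phi> q) = m (\<phi> p) (\<phi> q)"
proof -
  assume p: "p\<in>P" and q: "q\<in>P"
  define a where "a = \<phi> p" define b where "b = \<phi> q"
  have aS: "a\<in>S" "b\<in>S" using p q phiS a_def b_def by auto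
  have Da: "D a = a" "m a a = a" using p phiproj phiidem a_def by auto
  define e where "e = D (m a b)"
  have eS: "e \<in> S" using aS mS DS e_def by auto
  have e1: "e = m (m a e) a" using d3[OF aS] unfolding e_def[symmetric] Da(1) .
  have maeS: "m a e \<in> S" using mS aS eS by auto
  have "m e a = m (m (m a e) a) a" using arg_cong[OF e1, of "\<lambda>x. m x a"] .
  also have "\<dots> = m (m a e) (m a a)" using assoc[OF maeS aS(1) aS(1)] by simp
  also have "\<dots> = e" using Da(2) e1[symmetric] by simp
  finally have "m e a = e" .
  then have "m e b = m (m e a) b" by simp
  also have "\<dots> = m e (m a b)" using assoc aS eS by auto
  also have "\<dots> = m a b" using d1 aS mS e_def by auto
  finally show ?thesis using e_def a_def b_def by simp
qed

lemma projR: "p\<in>P \<Longrightarrow> q\<in>P \<Longrightarrow> m (\<phi> p) (R (m (\<phi> p) (\<phi> q))) = m (\<phi> p) (\<phi> q)"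
proof -
  assume p: "p\<in>P" and q: "q\<in>P"
  define a where "a = \<phi> p" define b where "b = \<phi> q"
  have aS: "a\<in>S" "b\<in>S" using p q phiS a_def b_def by auto
  have Rb: "R b = b" "m b b = b" using q phiproj phiidem b_def by auto
  define e where "e = R (m a b)"
  have eS: "e \<in> S" using aS mS RS e_def by auto
  have e1: "e = m (m b e) b" using r3[OF aS] unfolding e_def[symmetric] Rb(1) .
  have mbeS: "m b e \<in> S" using mS aS eS by auto
  have "m b e = m b (m (m b e) b)" using arg_cong[OF e1, of "\<lambda>x. m b x"] .
  also have "\<dots> = m (m b b) (m e b)" using assoc aS eS mS by metis
  also have "\<dots> = m b (m e b)" using Rb(2) by simp
  also have "\<dots> = m (m b e) b" using assoc aS eS by metis
  also have "\<dots> = e" using e1[symmetric] by simp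
  finally have "m b e = e" .
  then have "m a e = m a (m b e)" by simp
  also have "\<dots> = m (m a b) e" using assoc aS eS by auto
  also have "\<dots> = m a b" using r1 aS mS e_def by auto
  finally show ?thesis using e_def a_def b_def by simp
qed

definition ev :: "'p list \<Rightarrow> 's" where "ev w = prodl m (map \<phi> w)"

lemma prodlS: "w \<noteq> [] \<Longrightarrow> set w \<subseteq> S \<Longrightarrow> prodl m w \<in> S"
proof (induction w)
  case (Cons a w) then show ?case by (cases w) (auto intro: mS)
qed simp

lemma prodl_app: "u \<noteq> [] \<Longrightarrow> v \<noteq> [] \<Longrightarrow> set u \<subseteq> S \<Longrightarrow> set v \<subseteq> S \<Longrightarrow>
   prodl m (u @ v) = m (prodl m u) (prodl m v)"
proof (induction u)
  case Nil then show ?case by simp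
next
  case (Cons a u)
  note Cprems = Cons.prems and CIH = Cons.IH
  show ?case
  proof (cases u)
    case Nil
    obtain c v' where "v = c # v'" using Cprems(2) by (cases v) auto
    then show ?thesis using Nil by simp
  next
    case (Cons b u')
    have IH: "prodl m (u @ v) = m (prodl m u) (prodl m v)" using CIH Cprems Cons by simp
    have S1: "a \<in> S" "prodl m u \<in> S" "prodl m v \<in> S" using Cprems Cons prodlS by auto
    have "prodl m ((a # u) @ v) = m a (prodl m (u @ v))" using Cons by simp
    also have "\<dots> = m a (m (prodl m u) (prodl m v))" using IH by simp
    also have "\<dots> = m (m a (prodl m u)) (prodl m v)" using assoc[OF S1] by simp
    finally show ?thesis using Cons by simp
  qed
qed

lemma evS: "w \<noteq> [] \<Longrightarrow> set w \<subseteq> P \<Longrightarrow> ev w \<in> S"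
  unfolding ev_def by (rule prodlS) (auto simp: phiS)

lemma ev_app: "u \<noteq> [] \<Longrightarrow> v \<noteq> [] \<Longrightarrow> set u \<subseteq> P \<Longrightarrow> set v \<subseteq> P \<Longrightarrow> ev (u @ v) = m (ev u) (ev v)"
  unfolding ev_def by (subst map_append, rule prodl_app) (auto simp: phiS)

lemma ev_Cons: "w \<noteq> [] \<Longrightarrow> ev (p # w) = m (\<phi> p) (ev w)"
  unfolding ev_def by (cases w) auto

lemma ev_single[simp]: "ev [p] = \<phi> p" unfolding ev_def by simp

lemma feq_P: "feq P th dl u v \<Longrightarrow> set u \<subseteq> P \<and> set v \<subseteq> P"
  by (induction rule: feq.induct) (auto intro: cl)

lemma feq_ne: "feq P th dl u v \<Longrightarrow> (u = [] \<longleftrightarrow> v = [])"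
  by (induction rule: feq.induct) auto

lemma feq_ev: "feq P th dl u v \<Longrightarrow> ev u = ev v"
proof (induction rule: feq.induct)
  case (idem p) then show ?case by (simp add: ev_Cons phiidem)
next
  case (rth p q) then show ?case by (simp add: ev_Cons phith projR cl)
next
  case (rdl p q) then show ?case by (simp add: ev_Cons phidl projD cl)
next
  case (ctxt u v x y)
  have IH: "ev u = ev v" using ctxt by blast
  have xP: "set x \<subseteq> P" and yP: "set y \<subseteq> P" using ctxt by blast+
  have uv: "set u \<subseteq> P" "set v \<subseteq> P" using feq_P[OF ctxt(1)] by auto
  show ?case
  proof (cases "u = []")
    case True then have "v = []" using feq_ne[OF ctxt(1)] by simp
    then show ?thesis using True by simp
  next
    case False then have vne: "v \<noteq> []" using feq_ne[OF ctxt(1)] by simp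
    have A: "ev (u @ y) = ev (v @ y)"
    proof (cases "y = []")
      case True then show ?thesis using IH by simp
    next
      case yne: False
      have "ev (u @ y) = m (ev u) (ev y)" by (rule ev_app[OF False yne uv(1) yP])
      also have "\<dots> = m (ev v) (ev y)" using IH by simp
      also have "\<dots> = ev (v @ y)" by (rule ev_app[OF vne yne uv(2) yP, symmetric])
      finally show ?thesis .
    qed
    have ne: "u @ y \<noteq> []" "v @ y \<noteq> []" using False vne by auto
    have P2: "set (u @ y) \<subseteq> P" "set (v @ y) \<subseteq> P" using uv yP by auto
    show ?thesis
    proof (cases "x = []")
      case True then show ?thesis using A by simp
    next
      case xne: False
      have "ev (x @ (u @ y)) = m (ev x) (ev (u @ y))" by (rule ev_app[OF xne ne(1) xP P2(1)])
      also have "\<dots> = m (ev x) (ev (v @ y))" using A by simp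
      also have "\<dots> = ev (x @ (v @ y))" by (rule ev_app[OF xne ne(2) xP P2(2), symmetric])
      finally show ?thesis .
    qed
  qed
qed auto

lemma feq_left: "feq P th dl u v \<Longrightarrow> set x \<subseteq> P \<Longrightarrow> feq P th dl (x @ u) (x @ v)"
  using feq.ctxt[of P th dl u v x "[]"] by simp
lemma feq_right: "feq P th dl u v \<Longrightarrow> set y \<subseteq> P \<Longrightarrow> feq P th dl (u @ y) (v @ y)"
  using feq.ctxt[of P th dl u v "[]" y] by simp

lemma fclass_eq: "feq P th dl u v \<Longrightarrow> fclass P th dl u = fclass P th dl v"
  unfolding fclass_def by (auto intro: feq.trans feq.sym)

lemma fclass_mem: "set w \<subseteq> P \<Longrightarrow> w \<in> fclass P th dl w"
  unfolding fclass_def by (auto intro: feq.refl)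

lemma backprop:
  "successively (Frel th dl) ps \<Longrightarrow> ps \<noteq> [] \<Longrightarrow> set ps \<subseteq> P \<Longrightarrow> t \<in> P \<Longrightarrow>
   \<exists>ps'. successively (Frel th dl) ps' \<and> ps' \<noteq> [] \<and> set ps' \<subseteq> P \<and> last ps' = dl t (last ps)
        \<and> feq P th dl (butlast ps @ [dl t (last ps)]) ps'"
proof (induction ps arbitrary: t rule: rev_induct)
  case Nil then show ?case by simp
next
  case (snoc x xs)
  show ?case
  proof (cases "xs = []")
    case True
    then show ?thesis using snoc by (auto intro!: exI[of _ "[dl t x]"] feq.refl cl)
  next
    case False
    define s where "s = last xs"
    define r' where "r' = dl t x"
    have xP: "x \<in> P" and xsP: "set xs \<subseteq> P" and sP: "s \<in> P" using snoc False s_def by auto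
    have r'P: "r' \<in> P" using cl xP snoc r'_def by auto
    have sx: "Frel th dl s x" using snoc(2) False s_def by (simp add: successively_append_iff)
    have chxs: "successively (Frel th dl) xs" using snoc(2) by (simp add: successively_append_iff)
    obtain ps'' where ps'': "successively (Frel th dl) ps''" "ps'' \<noteq> []" "set ps'' \<subseteq> P"
      "last ps'' = dl r' s" "feq P th dl (butlast xs @ [dl r' s]) ps''"
      using snoc.IH[OF chxs False xsP r'P] s_def by auto
    have xs_eq: "xs = butlast xs @ [s]" using False s_def by simp
    have bP: "set (butlast xs) \<subseteq> P" using xsP by (meson in_set_butlastD subset_iff)
    have f1: "feq P th dl (butlast xs @ [s, r']) (butlast xs @ [dl r' s, r'])"
      using feq_left[OF feq.rdl[OF sP r'P] bP] by simp
    have f2: "feq P th dl ((butlast xs @ [dl r' s]) @ [r']) (ps'' @ [r'])"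
      using feq_right[OF ps''(5)] r'P by simp
    have e1: "xs @ [r'] = butlast xs @ [s, r']" using xs_eq by (metis append.assoc append_Cons append_Nil)
    have e2: "(butlast xs @ [dl r' s]) @ [r'] = butlast xs @ [dl r' s, r']" by simp
    have f: "feq P th dl (xs @ [r']) (ps'' @ [r'])"
      unfolding e1 using feq.trans[OF f1 f2[unfolded e2]] .
    have ch: "successively (Frel th dl) (ps'' @ [r'])"
      using ps'' L2[OF sP xP snoc(5) sx] r'_def by (simp add: successively_append_iff)
    show ?thesis
      by (rule exI[of _ "ps'' @ [r']"]) (use f ch ps'' r'P r'_def in auto)
  qed
qed

lemma chain_exists:
  "w \<noteq> [] \<Longrightarrow> set w \<subseteq> P \<Longrightarrow>
   \<exists>ps. ps \<noteq> [] \<and> set ps \<subseteq> P \<and> successively (Frel th dl) ps \<and> feq P th dl w ps"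
proof (induction w rule: rev_induct)
  case Nil then show ?case by simp
next
  case (snoc q v)
  show ?case
  proof (cases "v = []")
    case True then show ?thesis using snoc by (auto intro!: exI[of _ "[q]"] feq.refl)
  next
    case False
    have qP: "q \<in> P" and vP: "set v \<subseteq> P" using snoc by auto
    obtain ps where ps: "ps \<noteq> []" "set ps \<subseteq> P" "successively (Frel th dl) ps" "feq P th dl v ps"
      using snoc.IH[OF False vP] by auto
    define r where "r = last ps"
    define q' where "q' = th r q"
    define r' where "r' = dl q' r"
    have rP: "r \<in> P" using ps r_def by auto
    have q'P: "q' \<in> P" using cl rP qP q'_def by auto
    obtain ps' where ps': "successively (Frel th dl) ps'" "ps' \<noteq> []" "set ps' \<subseteq> P" "last ps' = r'"
        "feq P th dl (butlast ps @ [r']) ps'"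
      using backprop[OF ps(3) ps(1) ps(2) q'P] r_def r'_def by auto
    have bP: "set (butlast ps) \<subseteq> P" using ps by (meson in_set_butlastD subset_iff)
    have pseq: "ps = butlast ps @ [r]" using ps r_def by simp
    have f0: "feq P th dl (v @ [q]) (ps @ [q])" using feq_right[OF ps(4)] qP by simp
    have f1: "feq P th dl (butlast ps @ [r, q]) (butlast ps @ [r, q'])"
      using feq_left[OF feq.rth[OF rP qP] bP] q'_def by simp
    have f2: "feq P th dl (butlast ps @ [r, q']) (butlast ps @ [r', q'])"
      using feq_left[OF feq.rdl[OF rP q'P] bP] r'_def by simp
    have f3: "feq P th dl ((butlast ps @ [r']) @ [q']) (ps' @ [q'])"
      using feq_right[OF ps'(5)] q'P by simp
    have f: "feq P th dl (v @ [q]) (ps' @ [q'])"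
    proof -
      have "ps @ [q] = butlast ps @ [r, q]" using pseq by (metis append.assoc append_Cons append_Nil)
      then have g: "feq P th dl (v @ [q]) (butlast ps @ [r, q])" using f0 by (simp only:)
      show ?thesis using feq.trans[OF feq.trans[OF feq.trans[OF g f1] f2]] f3 by simp
    qed
    have ch: "successively (Frel th dl) (ps' @ [q'])"
      using ps' L1[OF rP qP] q'_def r'_def by (simp add: successively_append_iff)
    show ?thesis by (rule exI[of _ "ps' @ [q']"]) (use f ch ps' q'P in auto)
  qed
qed

lemma Frel_phi: "p\<in>P \<Longrightarrow> q\<in>P \<Longrightarrow> Frel th dl p q \<Longrightarrow>
   \<phi> p = D (m (\<phi> p) (\<phi> q)) \<and> \<phi> q = R (m (\<phi> p) (\<phi> q))"
  unfolding Frel_def by (metis phidl phith)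

lemma chain_D: "successively (Frel th dl) ps \<Longrightarrow> ps \<noteq> [] \<Longrightarrow> set ps \<subseteq> P \<Longrightarrow> D (ev ps) = \<phi> (hd ps)"
proof (induction ps)
  case Nil then show ?case by simp
next
  case (Cons p w)
  show ?case
  proof (cases w)
    case Nil then show ?thesis using Cons phiproj by simp
  next
    case (Cons q w')
    have pq: "Frel th dl p q" using Cons.prems Cons by simp
    have IH: "D (ev w) = \<phi> q" using Cons.IH Cons.prems Cons by simp
    have "D (ev (p # w)) = D (m (\<phi> p) (ev w))" using Cons ev_Cons by simp
    also have "\<dots> = D (m (\<phi> p) (D (ev w)))" using d2[of "\<phi> p" "ev w"] phiS evS Cons.prems Cons by simp
    also have "\<dots> = D (m (\<phi> p) (\<phi> q))" using IH by simp
    also have "\<dots> = \<phi> p" using Frel_phi[OF _ _ pq] Cons.prems Cons by (metis list.set_intros(1) subset_code(1) set_subset_Cons)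
    finally show ?thesis by simp
  qed
qed

lemma chain_R: "successively (Frel th dl) ps \<Longrightarrow> ps \<noteq> [] \<Longrightarrow> set ps \<subseteq> P \<Longrightarrow> R (ev ps) = \<phi> (last ps)"
proof (induction ps rule: rev_induct)
  case Nil then show ?case by simp
next
  case (snoc q w)
  show ?case
  proof (cases "w = []")
    case True then show ?thesis using snoc phiproj by simp
  next
    case False
    define p where "p = last w"
    have pq: "Frel th dl p q" using snoc.prems False p_def by (simp add: successively_append_iff)
    have wP: "set w \<subseteq> P" and pP: "p \<in> P" and qP: "q \<in> P" using snoc.prems False p_def by auto
    have IH: "R (ev w) = \<phi> p" using snoc.IH snoc.prems False p_def by (simp add: successively_append_iff)
    have "R (ev (w @ [q])) = R (m (ev w) (\<phi> q))" using ev_app[OF False _ wP] qP by simp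
    also have "\<dots> = R (m (R (ev w)) (\<phi> q))" using r2[of "ev w" "\<phi> q"] phiS evS False wP qP by simp
    also have "\<dots> = R (m (\<phi> p) (\<phi> q))" using IH by simp
    also have "\<dots> = \<phi> q" using Frel_phi[OF pP qP pq] by metis
    finally show ?thesis by simp
  qed
qed

definition Phi :: "'p list set \<Rightarrow> 's" where "Phi A = ev (SOME u. u \<in> A)"

lemma Phi_fclass: "set w \<subseteq> P \<Longrightarrow> Phi (fclass P th dl w) = ev w"
proof -
  assume w: "set w \<subseteq> P"
  have "(SOME u. u \<in> fclass P th dl w) \<in> fclass P th dl w" using fclass_mem[OF w] by (rule someI)
  then have "feq P th dl w (SOME u. u \<in> fclass P th dl w)" unfolding fclass_def by simp
  then show ?thesis unfolding Phi_def using feq_ev by metis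
qed

lemma Fmult_fclass: "set u \<subseteq> P \<Longrightarrow> set v \<subseteq> P \<Longrightarrow>
   Fmult P th dl (fclass P th dl u) (fclass P th dl v) = fclass P th dl (u @ v)"
proof -
  assume u: "set u \<subseteq> P" and v: "set v \<subseteq> P"
  define u0 where "u0 = (SOME x. x \<in> fclass P th dl u)"
  define v0 where "v0 = (SOME x. x \<in> fclass P th dl v)"
  have "u0 \<in> fclass P th dl u" unfolding u0_def using fclass_mem[OF u] by (rule someI)
  then have fu: "feq P th dl u u0" unfolding fclass_def by simp
  have "v0 \<in> fclass P th dl v" unfolding v0_def using fclass_mem[OF v] by (rule someI)
  then have fv: "feq P th dl v v0" unfolding fclass_def by simp
  have "feq P th dl (u @ v) (u0 @ v0)"
    using feq.trans[OF feq_right[OF fu v] feq_left[OF fv]] feq_P[OF fu] by simp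
  then show ?thesis unfolding Fmult_def u0_def[symmetric] v0_def[symmetric]
    by (simp add: fclass_eq)
qed

lemma Fcar_iff: "A \<in> Fcar P th dl \<longleftrightarrow> (\<exists>w. w \<noteq> [] \<and> set w \<subseteq> P \<and> A = fclass P th dl w)"
  unfolding Fcar_def by auto

lemma rep_props: assumes "A \<in> Fcar P th dl"
  shows "Fchain_rep P th dl A \<noteq> [] \<and> set (Fchain_rep P th dl A) \<subseteq> P \<and>
      successively (Frel th dl) (Fchain_rep P th dl A) \<and> fclass P th dl (Fchain_rep P th dl A) = A"
proof -
  obtain w where w: "w \<noteq> []" "set w \<subseteq> P" "A = fclass P th dl w" using assms Fcar_iff by auto
  obtain ps where ps: "ps \<noteq> []" "set ps \<subseteq> P" "successively (Frel th dl) ps" "feq P th dl w ps"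
    using chain_exists[OF w(1,2)] by auto
  have "fclass P th dl ps = A" using fclass_eq[OF ps(4)] w by simp
  then have "\<exists>ps. ps \<noteq> [] \<and> set ps \<subseteq> P \<and> successively (Frel th dl) ps \<and> fclass P th dl ps = A"
    using ps by auto
  then show ?thesis unfolding Fchain_rep_def by (rule someI_ex)
qed

lemma Phi_morph: "drc_morph (Fcar P th dl) (Fmult P th dl) (FD P th dl) (FR P th dl) S m D R Phi"
  unfolding drc_morph_def
proof (intro conjI ballI)
  fix a assume "a \<in> Fcar P th dl"
  then obtain w where w: "w \<noteq> []" "set w \<subseteq> P" "a = fclass P th dl w" using Fcar_iff by auto
  then show "Phi a \<in> S" using Phi_fclass evS by simp
next
  fix a b assume a: "a \<in> Fcar P th dl" and b: "b \<in> Fcar P th dl"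
  obtain u where u: "u \<noteq> []" "set u \<subseteq> P" "a = fclass P th dl u" using a Fcar_iff by auto
  obtain v where v: "v \<noteq> []" "set v \<subseteq> P" "b = fclass P th dl v" using b Fcar_iff by auto
  have uv: "set (u @ v) \<subseteq> P" using u v by simp
  have "Phi (Fmult P th dl a b) = Phi (fclass P th dl (u @ v))" using Fmult_fclass[OF u(2) v(2)] u(3) v(3) by simp
  also have "\<dots> = ev (u @ v)" by (rule Phi_fclass[OF uv])
  also have "\<dots> = m (ev u) (ev v)" by (rule ev_app[OF u(1) v(1) u(2) v(2)])
  also have "\<dots> = m (Phi a) (Phi b)" using Phi_fclass[OF u(2)] Phi_fclass[OF v(2)] u(3) v(3) by simp
  finally show "Phi (Fmult P th dl a b) = m (Phi a) (Phi b)" .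
next
  fix a assume a: "a \<in> Fcar P th dl"
  define ps where "ps = Fchain_rep P th dl a"
  have ps: "ps \<noteq> []" "set ps \<subseteq> P" "successively (Frel th dl) ps" "fclass P th dl ps = a"
    using rep_props[OF a] ps_def by auto
  have hP: "hd ps \<in> P" "last ps \<in> P" using ps by auto
  have Pa: "Phi a = ev ps" using Phi_fclass[OF ps(2)] ps(4) by simp
  have g1: "Phi (fclass P th dl [hd ps]) = \<phi> (hd ps)" using Phi_fclass[of "[hd ps]"] hP by simp
  have g2: "Phi (fclass P th dl [last ps]) = \<phi> (last ps)" using Phi_fclass[of "[last ps]"] hP by simp
  show "Phi (FD P th dl a) = D (Phi a)"
    unfolding FD_def Fgen_def ps_def[symmetric] g1 Pa using chain_D[OF ps(3) ps(1) ps(2)] by simp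
  show "Phi (FR P th dl a) = R (Phi a)"
    unfolding FR_def Fgen_def ps_def[symmetric] g2 Pa using chain_R[OF ps(3) ps(1) ps(2)] by simp
qed

lemma Phi_gen: "p \<in> P \<Longrightarrow> Phi (Fgen P th dl p) = \<phi> p"
  unfolding Fgen_def using Phi_fclass[of "[p]"] by simp

lemma uniq:
  assumes "drc_morph (Fcar P th dl) (Fmult P th dl) (FD P th dl) (FR P th dl) S m D R \<Psi>"
    and "\<forall>p\<in>P. \<Psi> (Fgen P th dl p) = \<phi> p"
  shows "w \<noteq> [] \<Longrightarrow> set w \<subseteq> P \<Longrightarrow> \<Psi> (fclass P th dl w) = ev w"
proof (induction w)
  case Nil then show ?case by simp
next
  case (Cons p w)
  show ?case
  proof (cases "w = []")
    case True then show ?thesis using Cons assms(2) unfolding Fgen_def by simp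
  next
    case False
    have pP: "p \<in> P" and wP: "set w \<subseteq> P" using Cons by auto
    have c1: "fclass P th dl [p] \<in> Fcar P th dl" unfolding Fcar_iff using pP by (intro exI[of _ "[p]"]) simp
    have c2: "fclass P th dl w \<in> Fcar P th dl" unfolding Fcar_iff using False wP by (intro exI[of _ w]) simp
    have "fclass P th dl (p # w) = Fmult P th dl (fclass P th dl [p]) (fclass P th dl w)"
      using Fmult_fclass[of "[p]" w] pP wP by simp
    then have "\<Psi> (fclass P th dl (p # w)) = m (\<Psi> (fclass P th dl [p])) (\<Psi> (fclass P th dl w))"
      using assms(1) c1 c2 unfolding drc_morph_def by simp
    also have "\<dots> = m (\<phi> p) (ev w)" using Cons.IH False wP assms(2) pP unfolding Fgen_def by simp
    finally show ?thesis using ev_Cons False by simp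
  qed
qed

lemma main:
  "\<exists>\<Phi>. drc_morph (Fcar P th dl) (Fmult P th dl) (FD P th dl) (FR P th dl) S m D R \<Phi>
            \<and> (\<forall>p\<in>P. \<Phi> (Fgen P th dl p) = \<phi> p)
            \<and> (\<forall>\<Psi>. drc_morph (Fcar P th dl) (Fmult P th dl) (FD P th dl) (FR P th dl) S m D R \<Psi>
                    \<and> (\<forall>p\<in>P. \<Psi> (Fgen P th dl p) = \<phi> p)
                  \<longrightarrow> (\<forall>a\<in>Fcar P th dl. \<Psi> a = \<Phi> a))"
proof -
  have U: "\<forall>\<Psi>. drc_morph (Fcar P th dl) (Fmult P th dl) (FD P th dl) (FR P th dl) S m D R \<Psi>
                    \<and> (\<forall>p\<in>P. \<Psi> (Fgen P th dl p) = \<phi> p)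
                  \<longrightarrow> (\<forall>a\<in>Fcar P th dl. \<Psi> a = Phi a)"
  proof (intro allI impI ballI)
    fix \<Psi> a
    assume h: "drc_morph (Fcar P th dl) (Fmult P th dl) (FD P th dl) (FR P th dl) S m D R \<Psi>
        \<and> (\<forall>p\<in>P. \<Psi> (Fgen P th dl p) = \<phi> p)" and a: "a \<in> Fcar P th dl"
    obtain w where w: "w \<noteq> []" "set w \<subseteq> P" "a = fclass P th dl w" using a Fcar_iff by auto
    have "\<Psi> (fclass P th dl w) = ev w" using uniq[of \<Psi> w] h w(1,2) by blast
    then show "\<Psi> a = Phi a" using Phi_fclass[OF w(2)] w(3) by simp
  qed
  have G: "\<forall>p\<in>P. Phi (Fgen P th dl p) = \<phi> p" using Phi_gen by blast
  show ?thesis using Phi_morph G U by blast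
qed

end

theorem proposition8p12:
  fixes P :: "'p set" and th dl :: "'p \<Rightarrow> 'p \<Rightarrow> 'p"
    and S :: "'s set" and m :: "'s \<Rightarrow> 's \<Rightarrow> 's" and D R :: "'s \<Rightarrow> 's"
    and \<phi> :: "'p \<Rightarrow> 's"
  assumes "proj_alg P th dl"
    and "drc_semigroup S m D R"
    and "proj_alg_morph P th dl (projs S D) (projs_th m R) (projs_dl m D) \<phi>"
  shows "\<exists>\<Phi>. drc_morph (Fcar P th dl) (Fmult P th dl) (FD P th dl) (FR P th dl) S m D R \<Phi>
            \<and> (\<forall>p\<in>P. \<Phi> (Fgen P th dl p) = \<phi> p)
            \<and> (\<forall>\<Psi>. drc_morph (Fcar P th dl) (Fmult P th dl) (FD P th dl) (FR P th dl) S m D R \<Psi>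
                    \<and> (\<forall>p\<in>P. \<Psi> (Fgen P th dl p) = \<phi> p)
                  \<longrightarrow> (\<forall>a\<in>Fcar P th dl. \<Psi> a = \<Phi> a))"
  using ctx.main[OF ctx.intro[OF assms]] .

end
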